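(* Let $A_1,A_2\in\mathbf{C}^{n\times n}$. The square bimatrix $\{A_1,A_2\}$ is nonsingular if and only if the complex matrix $$\{A_1,A_2\}_\diamond=\begin{bmatrix}A_1 & A_2^{\#}\\ A_2 & A_1^{\#}\end{bmatrix}\in\mathbf{C}^{2n\times 2n}$$ is nonsingular. Moreover, in that case $\{A_1,A_2\}^{-1}=\{A_3,A_4\}$, where $A_3,A_4\in\mathbf{C}^{n\times n}$ are given by $$\begin{bmatrix}A_3\\ A_4\end{bmatrix}=\left(\{A_1,A_2\}_\diamond\right)^{-1}\begin{bmatrix}I_n\\ 0_{n\times n}\end{bmatrix}.$$
   Context: For a complex matrix $P$, $P^{\#}$ denotes its entrywise complex conjugate. For $A_1,A_2\in\mathbf{C}^{n\times m}$, the bimatrix $\{A_1,A_2\}$ is the (real-linear) map $\mathbf{C}^m\to\mathbf{C}^n$, $x\mapsto A_1x+A_2^{\#}x^{\#}$. Two bimatrices are equal if they coincide as maps. The product of bimatrices is composition of maps: $\{A_1,A_2\}\{B_1,B_2\}x=\{A_1,A_2\}(\{B_1,B_2\}x)$; one has $\{A_1,A_2\}\{B_1,B_2\}=\{A_1B_1+A_2^{\#}B_2,\;A_1^{\#}B_2+A_2B_1\}$. The identity bimatrix is $\mathcal{I}_n=\{I_n,0_{n\times n}\}$ (the identity map on $\mathbf{C}^n$). A square bimatrix $\{A_1,A_2\}$ (with $A_1,A_2\in\mathbf{C}^{n\times n}$) is nonsingular if there exists a bimatrix $\{A_3,A_4\}$ with $\{A_1,A_2\}\{A_3,A_4\}=\{A_3,A_4\}\{A_1,A_2\}=\mathcal{I}_n$;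 then $\{A_3,A_4\}$ is called the inverse $\{A_1,A_2\}^{-1}$. *)

theory Defs
  imports "HOL-Analysis.Analysis"
begin

definition cnj_vec :: "complex ^ 'n \<Rightarrow> complex ^ 'n" where
  "cnj_vec x = (\<chi> i. cnj (x $ i))"

definition cnj_mat :: "complex ^ 'm ^ 'n \<Rightarrow> complex ^ 'm ^ 'n" where
  "cnj_mat A = (\<chi> i j. cnj (A $ i $ j))"

definition bimat_app :: "complex ^ 'm ^ 'n \<Rightarrow> complex ^ 'm ^ 'n \<Rightarrow> complex ^ 'm \<Rightarrow> complex ^ 'n" where
  "bimat_app A1 A2 x = A1 *v x + cnj_mat A2 *v cnj_vec x"

definition bimat_is_inverse ::
  "complex ^ 'n ^ 'n \<Rightarrow> complex ^ 'n ^ 'n \<Rightarrow> complex ^ 'n ^ 'n \<Rightarrow> complex ^ 'n ^ 'n \<Rightarrow> bool" where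
  "bimat_is_inverse A1 A2 A3 A4 \<longleftrightarrow>
     (\<forall>x. bimat_app A1 A2 (bimat_app A3 A4 x) = x) \<and>
     (\<forall>x. bimat_app A3 A4 (bimat_app A1 A2 x) = x)"

definition bimat_nonsingular :: "complex ^ 'n ^ 'n \<Rightarrow> complex ^ 'n ^ 'n \<Rightarrow> bool" where
  "bimat_nonsingular A1 A2 \<longleftrightarrow> (\<exists>A3 A4. bimat_is_inverse A1 A2 A3 A4)"

text \<open>The 2n x 2n complex matrix [A1, conj A2; A2, conj A1]; the first block
  of rows/columns is indexed by Inl, the second by Inr.\<close>
definition bimat_diamond ::
  "complex ^ 'n ^ 'n \<Rightarrow> complex ^ 'n ^ 'n \<Rightarrow> complex ^ ('n + 'n) ^ ('n + 'n)" where
  "bimat_diamond A1 A2 = (\<chi> i j. case (i, j) of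
       (Inl a, Inl b) \<Rightarrow> A1 $ a $ b
     | (Inl a, Inr b) \<Rightarrow> cnj (A2 $ a $ b)
     | (Inr a, Inl b) \<Rightarrow> A2 $ a $ b
     | (Inr a, Inr b) \<Rightarrow> cnj (A1 $ a $ b))"

definition id_zero_block :: "complex ^ 'n ^ ('n + 'n)" where
  "id_zero_block = (\<chi> i j. case i of Inl a \<Rightarrow> (if a = j then 1 else 0) | Inr _ \<Rightarrow> 0)"

definition upper_block :: "'a ^ 'm ^ ('n + 'n) \<Rightarrow> 'a ^ 'm ^ 'n" where
  "upper_block M = (\<chi> i j. M $ Inl i $ j)"

definition lower_block :: "'a ^ 'm ^ ('n + 'n) \<Rightarrow> 'a ^ 'm ^ 'n" where
  "lower_block M = (\<chi> i j. M $ Inr i $ j)"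

end

theory Submission
  imports Defs
begin

definition emb :: "complex ^ ('n::finite) \<Rightarrow> complex ^ ('n + 'n)" where
  "emb x = (\<chi> i. case i of Inl a \<Rightarrow> x $ a | Inr a \<Rightarrow> cnj (x $ a))"

definition sig :: "complex ^ ('n::finite + 'n) \<Rightarrow> complex ^ ('n + 'n)" where
  "sig w = (\<chi> i. case i of Inl a \<Rightarrow> cnj (w $ Inr a) | Inr a \<Rightarrow> cnj (w $ Inl a))"

lemma sum_plus_univ:
  "(\<Sum>i\<in>(UNIV::('a::finite + 'b::finite) set). f i) = (\<Sum>a\<in>UNIV. f (Inl a)) + (\<Sum>b\<in>UNIV. f (Inr b))"
  by (subst UNIV_Plus_UNIV[symmetric], subst sum.Plus) (auto simp: o_def)

lemma D_emb: "bimat_diamond A1 A2 *v emb x = emb (bimat_app A1 A2 x)"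
  by (auto simp: vec_eq_iff matrix_vector_mult_def bimat_diamond_def emb_def bimat_app_def
      sum_plus_univ cnj_mat_def cnj_vec_def split: sum.splits)

lemma D_sig: "bimat_diamond A1 A2 *v sig w = sig (bimat_diamond A1 A2 *v w)"
  by (auto simp: vec_eq_iff matrix_vector_mult_def bimat_diamond_def sig_def
      sum_plus_univ split: sum.splits)

lemma emb_inj: "emb x = emb y \<Longrightarrow> x = y"
  by (auto simp: vec_eq_iff emb_def) (metis sum.simps(5) vec_lambda_beta)

lemma emb_zero: "emb 0 = 0"
  by (auto simp: vec_eq_iff emb_def split: sum.splits)

lemma sig_zero: "sig 0 = 0"
  by (auto simp: vec_eq_iff sig_def split: sum.splits)

lemma cnj_vec_zero: "cnj_vec 0 = 0"
  by (simp add: cnj_vec_def vec_eq_iff)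

lemma bimat_app_zero: "bimat_app A B 0 = 0"
  by (simp add: bimat_app_def cnj_vec_zero)

lemma if_mult_aux: "(if a = j then 1 else 0) * (y::complex) = (if a = j then y else 0)"
  by simp

lemma matrix_inv_props:
  assumes "invertible A"
  shows "A ** matrix_inv A = mat 1 \<and> matrix_inv A ** A = mat 1"
  using assms unfolding invertible_def matrix_inv_def by (rule someI_ex)

lemma emb_decomp:
  "emb x = id_zero_block *v x + sig (id_zero_block *v x)"
  by (auto simp: vec_eq_iff emb_def sig_def id_zero_block_def matrix_vector_mult_def
      if_mult_aux if_distrib[of cnj] split: sum.splits)

lemma Y_emb:
  fixes Y :: "complex ^ 'n ^ ('n + 'n)"
  shows "Y *v x + sig (Y *v x) = emb (bimat_app (upper_block Y) (lower_block Y) x)"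
  by (auto simp: vec_eq_iff emb_def sig_def matrix_vector_mult_def bimat_app_def
      upper_block_def lower_block_def cnj_mat_def cnj_vec_def split: sum.splits)

lemma dir1:
  fixes A1 A2 :: "complex ^ 'n ^ 'n"
  assumes inv: "invertible (bimat_diamond A1 A2)"
  shows "bimat_is_inverse A1 A2
              (upper_block (matrix_inv (bimat_diamond A1 A2) ** id_zero_block))
              (lower_block (matrix_inv (bimat_diamond A1 A2) ** id_zero_block))"
proof -
  define D where "D = bimat_diamond A1 A2"
  define M where "M = matrix_inv D"
  define Y where "Y = M ** id_zero_block"
  have DM: "D ** M = mat 1" and MD: "M ** D = mat 1"
    using matrix_inv_props[OF inv] unfolding D_def M_def by auto
  have DMv: "D *v (M *v w) = w" for w
    by (simp add: matrix_vector_mul_assoc DM)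
  have MDv: "M *v (D *v w) = w" for w
    by (simp add: matrix_vector_mul_assoc MD)
  have Msig: "M *v sig w = sig (M *v w)" for w
  proof -
    have "D *v sig (M *v w) = sig w" unfolding D_def by (simp add: D_sig DMv[unfolded D_def])
    hence "M *v (D *v sig (M *v w)) = M *v sig w" by simp
    thus ?thesis by (simp add: MDv)
  qed
  have Memb: "M *v emb x = emb (bimat_app (upper_block Y) (lower_block Y) x)" for x
  proof -
    have "M *v emb x = Y *v x + sig (Y *v x)"
      unfolding emb_decomp[of x] matrix_vector_right_distrib Msig Y_def
      by (simp add: matrix_vector_mul_assoc)
    thus ?thesis using Y_emb by metis
  qed
  show ?thesis
    unfolding bimat_is_inverse_def Y_def[symmetric, unfolded M_def D_def]
  proof (intro conjI allI)
    fix x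
    have "emb (bimat_app A1 A2 (bimat_app (upper_block Y) (lower_block Y) x)) = emb x"
      using D_emb[of A1 A2, folded D_def] Memb DMv by metis
    thus "bimat_app A1 A2 (bimat_app (upper_block Y) (lower_block Y) x) = x"
      by (rule emb_inj)
  next
    fix x
    have "emb (bimat_app (upper_block Y) (lower_block Y) (bimat_app A1 A2 x)) = emb x"
      using D_emb[of A1 A2, folded D_def] Memb MDv by metis
    thus "bimat_app (upper_block Y) (lower_block Y) (bimat_app A1 A2 x) = x"
      by (rule emb_inj)
  qed
qed

lemma dir2:
  fixes A1 A2 :: "complex ^ 'n ^ 'n"
  assumes "bimat_is_inverse A1 A2 A3 A4"
  shows "invertible (bimat_diamond A1 A2)"
proof -
  define D where "D = bimat_diamond A1 A2"
  have gf: "bimat_app A3 A4 (bimat_app A1 A2 x) = x" for x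
    using assms by (simp add: bimat_is_inverse_def)
  have kill: "x = 0" if "D *v emb x = 0" for x
  proof -
    have "emb (bimat_app A1 A2 x) = emb 0" using that D_emb[of A1 A2 x] emb_zero
      unfolding D_def by simp
    hence "bimat_app A1 A2 x = 0" by (rule emb_inj)
    thus ?thesis using gf[of x] bimat_app_zero by metis
  qed
  have "inj ((*v) D)"
  proof (rule injI)
    fix x y assume xy: "D *v x = D *v y"
    define w where "w = x - y"
    have w: "D *v w = 0" using xy by (simp add: w_def matrix_vector_mult_diff_distrib)
    have ws: "D *v sig w = 0" using w by (simp add: D_def D_sig sig_zero)
    define a where "a = (\<chi> k. w $ Inl k + cnj (w $ Inr k))"
    define b where "b = (\<chi> k. \<i> * (w $ Inl k - cnj (w $ Inr k)))"
    have ea: "emb a = w + sig w"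
      by (auto simp: vec_eq_iff emb_def sig_def a_def split: sum.splits)
    have eb: "emb b = \<i> *s (w - sig w)"
      by (auto simp: vec_eq_iff emb_def sig_def b_def algebra_simps split: sum.splits)
    have "D *v emb a = 0" using w ws ea by (simp add: matrix_vector_right_distrib)
    hence a0: "a = 0" by (rule kill)
    have "D *v emb b = 0" using w ws eb
      by (simp add: vector_scalar_commute matrix_vector_mult_diff_distrib)
    hence b0: "b = 0" by (rule kill)
    have "w = 0"
    proof (unfold vec_eq_iff, intro allI)
      fix i show "w $ i = 0 $ i"
      proof (cases i)
        case (Inl k)
        have "w $ Inl k + cnj (w $ Inr k) = 0" "w $ Inl k - cnj (w $ Inr k) = 0"
          using a0 b0 unfolding a_def b_def vec_eq_iff by (auto dest: spec[of _ k])
        thus ?thesis using Inl by simp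
      next
        case (Inr k)
        have "w $ Inl k + cnj (w $ Inr k) = 0" "w $ Inl k - cnj (w $ Inr k) = 0"
          using a0 b0 unfolding a_def b_def vec_eq_iff by (auto dest: spec[of _ k])
        hence "cnj (w $ Inr k) = 0" by (simp add: algebra_simps)
        thus ?thesis using Inr by simp
      qed
    qed
    thus "x = y" by (simp add: w_def)
  qed
  thus ?thesis unfolding D_def invertible_left_inverse
    by (simp add: matrix_left_invertible_injective)
qed

theorem lemma1:
  fixes A1 A2 :: "complex ^ 'n ^ 'n"
  shows "(bimat_nonsingular A1 A2 \<longleftrightarrow> invertible (bimat_diamond A1 A2)) \<and>
         (invertible (bimat_diamond A1 A2) \<longrightarrow>
            bimat_is_inverse A1 A2
              (upper_block (matrix_inv (bimat_diamond A1 A2) ** id_zero_block))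
              (lower_block (matrix_inv (bimat_diamond A1 A2) ** id_zero_block)))"
  using dir1 dir2 unfolding bimat_nonsingular_def by blast

end
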